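(* Consider the planted $k$-factor model with $p=\lambda/n$, where $\lambda>0$ is a fixed constant. Let $\widehat H$ be the set of all pairs $\{u,v\}$ with $u\ne v$ such that $\deg_G(u)=k$ or $\deg_G(v)=k$. Then, conditioned on any realization of $H^*$ (and for $n$ large enough that $\lambda/n\le 1/2$), $$\mathbb E[\ell(\widehat H,H^* )\mid H^*]\le 1-e^{-2\lambda},\qquad \mathbb P\Big\{\ell(\widehat H,H^* )\le 1-\tfrac12 e^{-2\lambda}\ \Big|\ H^*\Big\}\ge 1-O(1/n).$$
   Context: Planted $k$-factor model: fix an integer $k\ge1$ and $n$ with $kn$ even. A $k$-factor on $[n]$ is a $k$-regular simple graph with vertex set $[n]$, identified with its edge set; $\mathcal H$ is the set of all $k$-factors on $[n]$. Let $p=\lambda/n\in[0,1]$. Draw $H^*$ uniformly at random from $\mathcal H$ and, independently, $G_0\sim\mathcal G(n,p)$ (each of the $\binom n2$ vertex pairs is an edge independently with probability $p$). The observed graph is $G=G_0\cup H^*$. The reconstruction error is $\ell(H^*,\widehat H)=\ell(\widehat H,H^* )=|H^*\triangle\widehat H|/|H^*|$, where $|H^*|=kn/2$. *)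

theory Defs
  imports "HOL-Probability.Probability"
begin

text \<open>Vertex set [n] is rendered as {0..<n}; a graph on [n] is a set of
  2-element vertex sets (its edge set).\<close>

definition vertex_pairs :: "nat \<Rightarrow> nat set set" where
  "vertex_pairs n = {e. \<exists>u v. u < n \<and> v < n \<and> u \<noteq> v \<and> e = {u, v}}"

definition degree :: "nat set set \<Rightarrow> nat \<Rightarrow> nat" where
  "degree G u = card {e \<in> G. u \<in> e}"

definition k_factors :: "nat \<Rightarrow> nat \<Rightarrow> nat set set set" where
  "k_factors n k = {H. H \<subseteq> vertex_pairs n \<and> (\<forall>u<n. degree H u = k)}"

definition gnp :: "nat \<Rightarrow> real \<Rightarrow> nat set set pmf" where
  "gnp n p = map_pmf (\<lambda>f. {e \<in> vertex_pairs n. f e})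
               (Pi_pmf (vertex_pairs n) False (\<lambda>_. bernoulli_pmf p))"

definition loss :: "nat set set \<Rightarrow> nat set set \<Rightarrow> real" where
  "loss Hhat H = real (card (sym_diff H Hhat)) / real (card H)"

definition deg_k_estimator :: "nat \<Rightarrow> nat set set \<Rightarrow> nat set set" where
  "deg_k_estimator k G = {e \<in> G. \<exists>u\<in>e. degree G u = k}"

end

theory Submission
  imports Defs
begin


lemma finite_vp: "finite (vertex_pairs n)"
proof -
  have "vertex_pairs n \<subseteq> (\<lambda>(u,v). {u,v}) ` ({..<n} \<times> {..<n})"
    unfolding vertex_pairs_def by auto
  thus ?thesis by (rule finite_subset) auto
qed

lemma set_gnp: "set_pmf (gnp n p) \<subseteq> Pow (vertex_pairs n)"
  unfolding gnp_def by auto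

lemma finite_set_gnp: "finite (set_pmf (gnp n p))"
  using set_gnp finite_vp by (meson finite_Pow_iff finite_subset)

lemma prob_avoid:
  assumes "0 \<le> p" "p \<le> 1" "S \<subseteq> vertex_pairs n"
  shows "measure_pmf.prob (gnp n p) {G. G \<inter> S = {}} = (1 - p) ^ card S"
proof -
  define V where "V = vertex_pairs n"
  define B where "B = (\<lambda>e. if e \<in> S then {False} else (UNIV::bool set))"
  have "(\<lambda>f. {e \<in> V. f e}) -` {G. G \<inter> S = {}} = Pi V B"
    using assms(3) unfolding B_def V_def Pi_def by auto
  hence "measure_pmf.prob (gnp n p) {G. G \<inter> S = {}} = measure_pmf.prob (Pi_pmf V False (\<lambda>_. bernoulli_pmf p)) (Pi V B)"
    unfolding gnp_def measure_map_pmf V_def by simp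
  also have "\<dots> = (\<Prod>e\<in>V. measure_pmf.prob (bernoulli_pmf p) (B e))"
    by (rule measure_Pi_pmf_Pi) (simp add: V_def finite_vp)
  also have "\<dots> = (\<Prod>e\<in>V. if e \<in> S then 1 - p else 1)"
    by (rule prod.cong) (use assms in \<open>auto simp: B_def measure_pmf_single\<close>)
  also have "\<dots> = (1 - p) ^ card S"
    using assms(3) finite_vp[of n] unfolding V_def
    by (simp add: prod.If_cases Int_absorb1)
  finally show ?thesis .
qed


lemma double_count:
  assumes "finite A" "finite U"
  shows "(\<Sum>u\<in>U. card {e\<in>A. u\<in>e}) = (\<Sum>e\<in>A. card (e \<inter> U))"
proof -
  have "(\<Sum>u\<in>U. card {e\<in>A. u\<in>e}) = (\<Sum>u\<in>U. \<Sum>e\<in>A. if u \<in> e then 1 else 0)"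
    using assms by (simp add: sum.If_cases Int_def)
  also have "\<dots> = (\<Sum>e\<in>A. \<Sum>u\<in>U. if u \<in> e then 1 else 0)"
    by (rule sum.swap)
  also have "\<dots> = (\<Sum>e\<in>A. card (e \<inter> U))"
    using assms by (simp add: sum.If_cases Int_def conj_commute)
  finally show ?thesis .
qed

lemma vp_card2: "e \<in> vertex_pairs n \<Longrightarrow> e \<subseteq> {..<n} \<and> card e = 2"
  unfolding vertex_pairs_def by auto

lemma handshake:
  assumes "H \<in> k_factors n k"
  shows "2 * card H = k * n"
proof -
  have HV: "H \<subseteq> vertex_pairs n" using assms by (simp add: k_factors_def)
  have fH: "finite H" using HV finite_vp finite_subset by blast
  have "k * n = (\<Sum>u\<in>{..<n}. card {e\<in>H. u\<in>e})"
    using assms by (simp add: k_factors_def degree_def)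
  also have "\<dots> = (\<Sum>e\<in>H. card (e \<inter> {..<n}))"
    using fH by (simp add: double_count)
  also have "\<dots> = (\<Sum>e\<in>H. 2)"
    by (rule sum.cong) (use HV vp_card2 in \<open>auto simp: Int_absorb2\<close>)
  finally show ?thesis by simp
qed


definition Nu :: "nat \<Rightarrow> nat set set \<Rightarrow> nat \<Rightarrow> nat set set" where
  "Nu n H u = {e \<in> vertex_pairs n - H. u \<in> e}"

definition clean :: "nat \<Rightarrow> nat set set \<Rightarrow> nat set set \<Rightarrow> nat \<Rightarrow> bool" where
  "clean n H G0 u = (G0 \<inter> Nu n H u = {})"

lemma deg_clean:
  assumes "H \<in> k_factors n k" "G0 \<subseteq> vertex_pairs n" "u < n"
  shows "(degree (G0 \<union> H) u = k) = clean n H G0 u"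
proof -
  have HV: "H \<subseteq> vertex_pairs n" using assms by (simp add: k_factors_def)
  have fV: "finite (vertex_pairs n)" by (rule finite_vp)
  have split: "{e \<in> G0 \<union> H. u \<in> e} = {e\<in>H. u\<in>e} \<union> (G0 \<inter> Nu n H u)"
    using assms(2) unfolding Nu_def by auto
  have fH: "finite H" by (rule finite_subset[OF HV fV])
  have f1: "finite {e\<in>H. u\<in>e}" using fH by simp
  have f2: "finite (G0 \<inter> Nu n H u)" using assms(2) fV by (meson finite_Int finite_subset)
  have "degree (G0 \<union> H) u = card {e\<in>H. u\<in>e} + card (G0 \<inter> Nu n H u)"
    unfolding degree_def split
    by (rule card_Un_disjoint[OF f1 f2]) (auto simp: Nu_def)
  also have "card {e\<in>H. u\<in>e} = k" using assms by (simp add: k_factors_def degree_def)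
  finally show ?thesis using f2 by (simp add: clean_def)
qed

lemma loss_bound:
  assumes "H \<in> k_factors n k" "G0 \<subseteq> vertex_pairs n" "k \<ge> 1"
  shows "loss (deg_k_estimator k (G0 \<union> H)) H \<le> 1 - real (card {u\<in>{..<n}. clean n H G0 u}) / real n"
proof -
  have HV: "H \<subseteq> vertex_pairs n" using assms by (simp add: k_factors_def)
  have fH: "finite H" using HV finite_vp finite_subset by blast
  define Hh where "Hh = deg_k_estimator k (G0 \<union> H)"
  define D where "D = {u\<in>{..<n}. \<not> clean n H G0 u}"
  define Cl where "Cl = {u\<in>{..<n}. clean n H G0 u}"
  have sub: "Hh \<subseteq> H"
  proof
    fix e assume "e \<in> Hh"
    then obtain u where e: "e \<in> G0 \<union> H" "u \<in> e" "degree (G0 \<union> H) u = k"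
      unfolding Hh_def deg_k_estimator_def by auto
    have eV: "e \<in> vertex_pairs n" using e(1) assms(2) HV by auto
    hence "u < n" using e(2) vp_card2 by blast
    hence "clean n H G0 u" using deg_clean[OF assms(1,2)] e(3) by blast
    thus "e \<in> H" using e eV unfolding clean_def Nu_def by auto
  qed
  have sd: "sym_diff H Hh = H - Hh" using sub by auto
  have inD: "e \<inter> {..<n} = e \<and> e \<subseteq> D" if "e \<in> H - Hh" for e
  proof -
    have eV: "e \<in> vertex_pairs n" using that HV by auto
    have "\<forall>u\<in>e. degree (G0 \<union> H) u \<noteq> k" using that unfolding Hh_def deg_k_estimator_def by auto
    thus ?thesis using eV vp_card2[OF eV] deg_clean[OF assms(1,2)] unfolding D_def by auto
  qed
  have fD: "finite D" unfolding D_def by simp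
  have "2 * card (H - Hh) = (\<Sum>e\<in>H - Hh. card (e \<inter> D))"
  proof -
    have "(\<Sum>e\<in>H - Hh. card (e \<inter> D)) = (\<Sum>e\<in>H - Hh. 2)"
      by (rule sum.cong) (use inD HV vp_card2 in \<open>auto simp: Int_absorb2\<close>)
    thus ?thesis by simp
  qed
  also have "\<dots> = (\<Sum>u\<in>D. card {e\<in>H - Hh. u\<in>e})"
    using double_count[of "H - Hh" D] fH fD by simp
  also have "\<dots> \<le> (\<Sum>u\<in>D. card {e\<in>H. u\<in>e})"
    by (rule sum_mono, rule card_mono) (use fH in auto)
  also have "\<dots> = (\<Sum>u\<in>D. k)"
    using assms(1) by (intro sum.cong) (auto simp: D_def k_factors_def degree_def)
  finally have c1: "2 * card (H - Hh) \<le> k * card D" by (simp add: mult.commute)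
  have c2: "2 * card H = k * n" by (rule handshake[OF assms(1)])
  have cD: "card D + card Cl = n"
  proof -
    have "D \<union> Cl = {..<n}" "D \<inter> Cl = {}" unfolding D_def Cl_def by auto
    thus ?thesis using card_Un_disjoint[of D Cl] fD unfolding Cl_def by (metis card_lessThan finite_Un finite_lessThan)
  qed
  show ?thesis
  proof (cases "n = 0")
    case True
    then show ?thesis using c2 assms(3) by (simp add: loss_def)
  next
    case False
    have kn: "real k * real n > 0" using False assms(3) by simp
    have "loss Hh H = real (card (H - Hh)) / real (card H)" by (simp add: loss_def sd)
    also have "\<dots> = (2 * real (card (H - Hh))) / (real k * real n)"
      using c2 by (metis (mono_tags, lifting) of_nat_mult of_nat_numeral mult_divide_mult_cancel_left_if zero_neq_numeral)
    also have "\<dots> \<le> (real k * real (card D)) / (real k * real n)"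
      using c1 kn by (intro divide_right_mono) (simp_all, metis of_nat_le_iff of_nat_mult of_nat_numeral)
    also have "\<dots> = real (card D) / real n" using kn assms(3) by simp
    also have "\<dots> = 1 - real (card Cl) / real n" using cD False
      by (simp add: field_simps)
    finally show ?thesis unfolding Hh_def Cl_def .
  qed
qed


lemma exp_cross:
  fixes f g :: "'a \<Rightarrow> real"
  assumes "finite (set_pmf M)"
  shows "measure_pmf.expectation M (\<lambda>x. (f x - a) * (g x - b)) =
    measure_pmf.expectation M (\<lambda>x. f x * g x) - b * measure_pmf.expectation M f
      - a * measure_pmf.expectation M g + a * b"
proof -
  have i: "\<And>h::'a\<Rightarrow>real. integrable M h" using assms by (rule integrable_measure_pmf_finite)
  have "(\<lambda>x. (f x - a) * (g x - b)) = (\<lambda>x. (f x * g x - b * f x) - (a * g x - a * b))"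
    by (auto simp: algebra_simps)
  hence "measure_pmf.expectation M (\<lambda>x. (f x - a) * (g x - b)) =
     measure_pmf.expectation M (\<lambda>x. (f x * g x - b * f x)) - measure_pmf.expectation M (\<lambda>x. a * g x - a * b)"
    using i by simp
  also have "\<dots> = measure_pmf.expectation M (\<lambda>x. f x * g x) - b * measure_pmf.expectation M f
      - (a * measure_pmf.expectation M g - a * b)"
    using i by simp
  finally show ?thesis by simp
qed

lemma exp_ind: "measure_pmf.expectation M (\<lambda>x. if P x then 1 else 0 :: real) = measure_pmf.prob M {x. P x}"
proof -
  have "(\<lambda>x. if P x then 1 else 0 :: real) = indicator {x. P x}" by (auto simp: indicator_def fun_eq_iff)
  thus ?thesis by simp
qed

lemma pow_bound:
  fixes x :: real
  assumes "0 \<le> x" "x \<le> 1" "a + b = c + d" "d \<le> 1"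
  shows "x ^ c - x ^ a * x ^ b \<le> 1 - x"
proof -
  have e: "x ^ a * x ^ b = x ^ (c + d)" using assms(3) by (metis power_add)
  show ?thesis
  proof (cases "d = 0")
    case True thus ?thesis using e assms by simp
  next
    case False
    hence "d = 1" using assms by simp
    hence "x ^ c - x ^ a * x ^ b = x ^ c * (1 - x)" using e by (simp add: algebra_simps)
    also have "\<dots> \<le> 1 * (1 - x)" using assms by (intro mult_right_mono) (simp_all add: power_le_one)
    finally show ?thesis by simp
  qed
qed

lemma Nu_sub: "Nu n H u \<subseteq> vertex_pairs n" unfolding Nu_def by auto

lemma Nu_card: "card (Nu n H u) \<le> n"
proof -
  have "Nu n H u \<subseteq> (\<lambda>v. {u,v}) ` {..<n}"
    unfolding Nu_def vertex_pairs_def by auto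
  hence "card (Nu n H u) \<le> card ((\<lambda>v. {u,v}) ` {..<n})" by (rule card_mono[rotated]) simp
  also have "\<dots> \<le> n" using card_image_le[of "{..<n}" "\<lambda>v. {u,v}"] by simp
  finally show ?thesis .
qed

lemma Nu_int: assumes "u \<noteq> w" shows "card (Nu n H u \<inter> Nu n H w) \<le> 1"
proof -
  have "Nu n H u \<inter> Nu n H w \<subseteq> {{u,w}}"
    unfolding Nu_def vertex_pairs_def using assms by auto
  thus ?thesis by (metis card.empty card_mono finite.emptyI finite.insertI is_singletonI is_singleton_altdef)
qed

lemma q_lower:
  assumes "n > 0" "0 < lambda" "lambda / real n \<le> 1/2" "c \<le> n"
  shows "exp (- 2 * lambda) \<le> (1 - lambda / real n) ^ c"
proof -
  define p where "p = lambda / real n"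
  have p0: "0 \<le> p" "p \<le> 1/2" using assms by (simp_all add: p_def)
  have "- p - 2 * p\<^sup>2 \<le> ln (1 - p)" using p0 by (intro ln_one_minus_pos_lower_bound) simp_all
  moreover have "- 2 * p \<le> - p - 2 * p\<^sup>2"
  proof -
    have "p * (2 * p) \<le> p * 1" using p0 by (intro mult_left_mono) simp_all
    thus ?thesis by (simp add: power2_eq_square)
  qed
  ultimately have l: "- 2 * p \<le> ln (1 - p)" by linarith
  have "exp (- 2 * lambda) = exp (real n * (- 2 * p))" using assms by (simp add: p_def)
  also have "\<dots> \<le> exp (real n * ln (1 - p))" using l by (intro exp_mono mult_left_mono) simp_all
  also have "\<dots> = (1 - p) ^ n" using p0 by (simp add: exp_of_nat_mult)
  also have "\<dots> \<le> (1 - p) ^ c" using p0 assms(4) by (intro power_decreasing) simp_all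
  finally show ?thesis by (simp add: p_def)
qed


lemma main_n:
  assumes H: "H \<in> k_factors n k" and k: "k \<ge> 1" and n: "n > 0" and l: "0 < lambda"
    and pl: "lambda / real n \<le> 1/2"
  shows "measure_pmf.expectation (gnp n (lambda / real n))
              (\<lambda>G0. loss (deg_k_estimator k (G0 \<union> H)) H) \<le> 1 - exp (- 2 * lambda)"
    and "measure_pmf.prob (gnp n (lambda / real n))
              {G0. loss (deg_k_estimator k (G0 \<union> H)) H \<le> 1 - exp (- 2 * lambda) / 2}
            \<ge> 1 - (4 * (1 + lambda) * exp (4 * lambda)) / real n"
proof -
  define p where "p = lambda / real n"
  define M where "M = gnp n p"
  define ee where "ee = exp (- 2 * lambda)"
  define X where "X = (\<lambda>u G. if clean n H G u then 1 else (0::real))"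
  define q where "q = (\<lambda>u. (1 - p) ^ card (Nu n H u))"
  define Y where "Y = (\<lambda>G. \<Sum>u<n. X u G)"
  define \<mu> where "\<mu> = (\<Sum>u<n. q u)"
  define L where "L = (\<lambda>G0. loss (deg_k_estimator k (G0 \<union> H)) H)"
  have p0: "0 \<le> p" "p \<le> 1/2" using l pl n by (simp_all add: p_def)
  have ee0: "ee > 0" by (simp add: ee_def)
  have fin: "finite (set_pmf M)" unfolding M_def by (rule finite_set_gnp)
  have int: "\<And>f::nat set set \<Rightarrow> real. integrable M f" using fin by (rule integrable_measure_pmf_finite)
  have EX: "measure_pmf.expectation M (X u) = q u" for u
  proof -
    have "measure_pmf.expectation M (X u) = measure_pmf.prob M {G. G \<inter> Nu n H u = {}}"
      unfolding X_def clean_def by (rule exp_ind)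
    also have "\<dots> = q u" unfolding M_def q_def using p0 Nu_sub by (intro prob_avoid) auto
    finally show ?thesis .
  qed
  have EXX: "measure_pmf.expectation M (\<lambda>G. X u G * X w G) = (1 - p) ^ card (Nu n H u \<union> Nu n H w)" for u w
  proof -
    have "(\<lambda>G. X u G * X w G) = (\<lambda>G. if G \<inter> (Nu n H u \<union> Nu n H w) = {} then 1 else 0)"
      unfolding X_def clean_def by (auto simp: fun_eq_iff)
    hence "measure_pmf.expectation M (\<lambda>G. X u G * X w G) = measure_pmf.prob M {G. G \<inter> (Nu n H u \<union> Nu n H w) = {}}"
      by (simp add: exp_ind)
    also have "\<dots> = (1 - p) ^ card (Nu n H u \<union> Nu n H w)" unfolding M_def using p0 Nu_sub by (intro prob_avoid) auto
    finally show ?thesis .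
  qed
  have qlow: "ee \<le> q u" for u
    unfolding ee_def q_def p_def using n l pl Nu_card by (intro q_lower) auto
  have EY: "measure_pmf.expectation M Y = \<mu>"
    unfolding Y_def \<mu>_def using int by (simp add: EX)
  have mulow: "real n * ee \<le> \<mu>"
    unfolding \<mu>_def using sum_bounded_below[of "{..<n}" ee q] qlow by simp
  have YL: "L G \<le> 1 - Y G / real n" if "G \<in> set_pmf M" for G
  proof -
    have G: "G \<subseteq> vertex_pairs n" using that set_gnp unfolding M_def by blast
    have "Y G = real (card {u\<in>{..<n}. clean n H G u})"
      unfolding Y_def X_def by (simp add: sum.If_cases Int_def)
    thus ?thesis using loss_bound[OF H G k] unfolding L_def by simp
  qed
  have "measure_pmf.expectation M L \<le> measure_pmf.expectation M (\<lambda>G. 1 - Y G / real n)"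
    using YL int by (intro integral_mono_AE) (auto intro: AE_pmfI)
  also have "\<dots> = 1 - \<mu> / real n" using int EY by simp
  also have "\<dots> \<le> 1 - ee" using mulow n by (simp add: field_simps)
  finally show "measure_pmf.expectation (gnp n (lambda / real n))
              (\<lambda>G0. loss (deg_k_estimator k (G0 \<union> H)) H) \<le> 1 - exp (- 2 * lambda)"
    unfolding M_def L_def p_def ee_def .
  have cov: "measure_pmf.expectation M (\<lambda>G. (X u G - q u) * (X w G - q w)) \<le> (if u = w then 1 else 0) + p" for u w
  proof -
    have e: "measure_pmf.expectation M (\<lambda>G. (X u G - q u) * (X w G - q w)) =
       (1 - p) ^ card (Nu n H u \<union> Nu n H w) - q u * q w"
      using exp_cross[OF fin, of "X u" "q u" "X w" "q w"] EX EXX by (simp add: algebra_simps)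
    show ?thesis
    proof (cases "u = w")
      case True
      have "(1 - p) ^ card (Nu n H u \<union> Nu n H w) \<le> 1" using p0 by (simp add: power_le_one)
      moreover have "q u * q w \<ge> 0" using p0 by (simp add: q_def)
      ultimately have "measure_pmf.expectation M (\<lambda>G. (X u G - q u) * (X w G - q w)) \<le> 1 + p" using e p0 by linarith
      thus ?thesis using True by simp
    next
      case False
      have fu: "finite (Nu n H u)" "finite (Nu n H w)" by (rule finite_subset[OF Nu_sub finite_vp])+
      have "(1 - p) ^ card (Nu n H u \<union> Nu n H w) - (1 - p) ^ card (Nu n H u) * (1 - p) ^ card (Nu n H w) \<le> 1 - (1 - p)"
        using p0 card_Un_Int[OF fu] Nu_int[OF False]
        by (intro pow_bound) simp_all
      thus ?thesis using e False unfolding q_def by simp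
    qed
  qed
  have var: "measure_pmf.variance M Y \<le> real n * (1 + lambda)"
  proof -
    have sq: "(Y G - \<mu>)\<^sup>2 = (\<Sum>u<n. \<Sum>w<n. (X u G - q u) * (X w G - q w))" for G
    proof -
      have d: "Y G - \<mu> = (\<Sum>u<n. X u G - q u)" unfolding Y_def \<mu>_def by (simp add: sum_subtractf)
      show ?thesis unfolding d by (simp only: power2_eq_square sum_product)
    qed
    have "measure_pmf.variance M Y = measure_pmf.expectation M (\<lambda>G. \<Sum>u<n. \<Sum>w<n. (X u G - q u) * (X w G - q w))"
      using EY sq by simp
    also have "\<dots> = (\<Sum>u<n. \<Sum>w<n. measure_pmf.expectation M (\<lambda>G. (X u G - q u) * (X w G - q w)))"
      using int by simp
    also have "\<dots> \<le> (\<Sum>u<n. \<Sum>w<n. (if u = w then 1 else 0) + p)"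
      by (intro sum_mono cov)
    also have "\<dots> = (\<Sum>u<n. 1 + real n * p)"
      by (intro sum.cong) (simp_all add: sum.distrib)
    also have "\<dots> = real n * (1 + lambda)" using n by (simp add: p_def)
    finally show ?thesis .
  qed
  define a where "a = real n * ee / 2"
  have a0: "a > 0" using n ee0 by (simp add: a_def)
  have cheb: "measure_pmf.prob M {G \<in> space M. a \<le> \<bar>Y G - measure_pmf.expectation M Y\<bar>} \<le> measure_pmf.variance M Y / a\<^sup>2"
    by (rule measure_pmf.Chebyshev_inequality) (simp_all add: int a0)
  define T where "T = 1 - ee / 2"
  have incl: "{G. \<not> L G \<le> T} \<inter> set_pmf M \<subseteq> {G \<in> space M. a \<le> \<bar>Y G - measure_pmf.expectation M Y\<bar>}"
  proof
    fix G assume G: "G \<in> {G. \<not> L G \<le> T} \<inter> set_pmf M"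
    hence "1 - Y G / real n > T" using YL by force
    hence "Y G < real n * ee / 2" using n by (simp add: T_def field_simps)
    thus "G \<in> {G \<in> space M. a \<le> \<bar>Y G - measure_pmf.expectation M Y\<bar>}"
      using mulow EY by (simp add: a_def abs_if)
  qed
  have "measure_pmf.prob M {G. \<not> L G \<le> T} = measure_pmf.prob M ({G. \<not> L G \<le> T} \<inter> set_pmf M)"
    by (simp add: measure_Int_set_pmf)
  also have "\<dots> \<le> measure_pmf.prob M {G \<in> space M. a \<le> \<bar>Y G - measure_pmf.expectation M Y\<bar>}"
    using incl by (intro measure_pmf.finite_measure_mono) simp_all
  also have "\<dots> \<le> real n * (1 + lambda) / a\<^sup>2"
    using cheb var a0 by (smt (verit) divide_right_mono zero_le_power2)
  also have "\<dots> = (4 * (1 + lambda) * exp (4 * lambda)) / real n"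
  proof -
    have "ee\<^sup>2 * exp (4 * lambda) = 1" unfolding ee_def
      by (simp add: power2_eq_square exp_add[symmetric])
    hence x: "exp (4 * lambda) = 1 / ee\<^sup>2" using ee0 by (simp add: field_simps)
    show ?thesis unfolding x a_def using n ee0 by (simp add: field_simps power2_eq_square)
  qed
  finally have P: "measure_pmf.prob M {G. \<not> L G \<le> T} \<le> (4 * (1 + lambda) * exp (4 * lambda)) / real n" .
  have "measure_pmf.prob M {G. L G \<le> T} = 1 - measure_pmf.prob M {G. \<not> L G \<le> T}"
    using measure_pmf.prob_compl[of "{G. \<not> L G \<le> T}" M] by (simp add: Compl_eq_Diff_UNIV[symmetric] Collect_neg_eq[symmetric])
  thus "measure_pmf.prob (gnp n (lambda / real n))
              {G0. loss (deg_k_estimator k (G0 \<union> H)) H \<le> 1 - exp (- 2 * lambda) / 2}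
            \<ge> 1 - (4 * (1 + lambda) * exp (4 * lambda)) / real n"
    using P unfolding M_def L_def T_def ee_def p_def by simp
qed


lemma vp0: "vertex_pairs 0 = {}" unfolding vertex_pairs_def by auto

theorem mainTheorem5:
  fixes k :: nat and lambda :: real
  assumes "k \<ge> 1" and "lambda > 0"
  shows "(\<forall>n H. H \<in> k_factors n k \<longrightarrow> lambda / real n \<le> 1/2 \<longrightarrow>
            measure_pmf.expectation (gnp n (lambda / real n))
              (\<lambda>G0. loss (deg_k_estimator k (G0 \<union> H)) H) \<le> 1 - exp (- 2 * lambda))
       \<and> (\<exists>C N. \<forall>n H. n \<ge> N \<longrightarrow> H \<in> k_factors n k \<longrightarrow>
            measure_pmf.prob (gnp n (lambda / real n))
              {G0. loss (deg_k_estimator k (G0 \<union> H)) H \<le> 1 - exp (- 2 * lambda) / 2}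
            \<ge> 1 - C / real n)"
proof (intro conjI allI impI)
  fix n H
  assume H: "H \<in> k_factors n k" and pl: "lambda / real n \<le> 1/2"
  show "measure_pmf.expectation (gnp n (lambda / real n))
              (\<lambda>G0. loss (deg_k_estimator k (G0 \<union> H)) H) \<le> 1 - exp (- 2 * lambda)"
  proof (cases "n = 0")
    case True
    hence "H = {}" using H vp0 by (auto simp: k_factors_def)
    hence "(\<lambda>G0. loss (deg_k_estimator k (G0 \<union> H)) H) = (\<lambda>_. 0)" by (simp add: loss_def fun_eq_iff)
    moreover have "exp (- 2 * lambda) \<le> 1" using assms by simp
    ultimately show ?thesis by simp
  next
    case False
    thus ?thesis using main_n(1)[OF H assms(1) _ assms(2) pl] by simp
  qed
next
  show "\<exists>C N. \<forall>n H. n \<ge> N \<longrightarrow> H \<in> k_factors n k \<longrightarrow>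
            measure_pmf.prob (gnp n (lambda / real n))
              {G0. loss (deg_k_estimator k (G0 \<union> H)) H \<le> 1 - exp (- 2 * lambda) / 2}
            \<ge> 1 - C / real n"
  proof (intro exI allI impI)
    fix n H
    assume nN: "nat \<lceil>2 * lambda\<rceil> + 1 \<le> n" and H: "H \<in> k_factors n k"
    have n0: "n > 0" using nN by simp
    have "2 * lambda \<le> real n" using nN by linarith
    hence pl: "lambda / real n \<le> 1/2" using n0 by (simp add: field_simps)
    show "measure_pmf.prob (gnp n (lambda / real n))
              {G0. loss (deg_k_estimator k (G0 \<union> H)) H \<le> 1 - exp (- 2 * lambda) / 2}
            \<ge> 1 - (4 * (1 + lambda) * exp (4 * lambda)) / real n"
      by (rule main_n(2)[OF H assms(1) n0 assms(2) pl])
  qed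
qed

end
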